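(* A category $\mathcal{C}$ is complete w.r.t. varieties if at least one of the following holds: (1) $\mathcal{C}$ is wellpowered w.r.t. varieties and has intersections; (2) $\mathcal{C}$ is complete w.r.t. systems of equations and every system of equations in $\mathcal{C}$ has a general solution.
   Context: An equation is a pair of parallel morphisms; a system of equations is a non-empty set of equations with a common domain $A$; a solution is a morphism $a$ into $A$ with $fa=ga$ for every equation $f\approx g$; $E\Rightarrow K$ means every solution of $E$ is a solution of $K$. A general solution of $E$ is a solution $v$ through which every solution factors uniquely; a variety is a general solution of some system. For morphisms with common codomain, $f\le v$ means $f=vh$ for some $h$. For a non-empty set $S$ of morphisms with codomain $A$: a system $E$ on $A$ is generated by $S$ if every element of $S$ is a solution of $E$ and every system $K$ on $A$ having all elements of $S$ as solutions satisfies $E\Rightarrow K$; a variety $v$ is generated by $S$ if $f\le v$ for all $f\in S$ and $v\le w$ for every variety $w$ with $f\le w$ for all $f\in S$. $\mathcal{C}$ is complete w.r.t. varieties (resp. systems of equations) if every non-empty set of morphisms with a common codomain generates some variety (resp. some system of equations). $\mathcal{C}$ is wellpowered w.r.t. varieties if for each object $A$ the varieties with codomain $A$ form a small class up to isomorphism ($f,g$ isomorphic if $f=gh$ for an isomorphism $h$). $\mathcal{C}$ has intersections if every set (possibly large families are not required) of monomorphisms with common codomain has a wide pullback. *)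

theory Defs
  imports Main
begin

record ('o, 'm) cat =
  Obj  :: "'o set"
  Arr  :: "'m set"
  Dom  :: "'m \<Rightarrow> 'o"
  Cod  :: "'m \<Rightarrow> 'o"
  Id   :: "'o \<Rightarrow> 'm"
  Comp :: "'m \<Rightarrow> 'm \<Rightarrow> 'm"   (* Comp C g f = g \<circ> f, defined when Cod f = Dom g *)

definition category :: "('o, 'm) cat \<Rightarrow> bool" where
  "category C \<longleftrightarrow>
     (\<forall>f\<in>Arr C. Dom C f \<in> Obj C \<and> Cod C f \<in> Obj C) \<and>
     (\<forall>A\<in>Obj C. Id C A \<in> Arr C \<and> Dom C (Id C A) = A \<and> Cod C (Id C A) = A) \<and>
     (\<forall>f\<in>Arr C. \<forall>g\<in>Arr C. Cod C f = Dom C g \<longrightarrow>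
        Comp C g f \<in> Arr C \<and> Dom C (Comp C g f) = Dom C f \<and> Cod C (Comp C g f) = Cod C g) \<and>
     (\<forall>f\<in>Arr C. Comp C (Id C (Cod C f)) f = f \<and> Comp C f (Id C (Dom C f)) = f) \<and>
     (\<forall>f\<in>Arr C. \<forall>g\<in>Arr C. \<forall>h\<in>Arr C. Cod C f = Dom C g \<longrightarrow> Cod C g = Dom C h \<longrightarrow>
        Comp C h (Comp C g f) = Comp C (Comp C h g) f)"

section \<open>Size: "sets" are collections of cardinality at most that of the universe type 'k\<close>

definition small :: "'k itself \<Rightarrow> 'a set \<Rightarrow> bool" where
  "small (k::'k itself) S \<longleftrightarrow> (\<exists>e :: 'k \<Rightarrow> 'a. S \<subseteq> range e)"

definition iso :: "('o, 'm) cat \<Rightarrow> 'm \<Rightarrow> bool" where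
  "iso C h \<longleftrightarrow> h \<in> Arr C \<and> (\<exists>h'\<in>Arr C. Dom C h' = Cod C h \<and> Cod C h' = Dom C h \<and>
      Comp C h' h = Id C (Dom C h) \<and> Comp C h h' = Id C (Cod C h))"

definition mono :: "('o, 'm) cat \<Rightarrow> 'm \<Rightarrow> bool" where
  "mono C m \<longleftrightarrow> m \<in> Arr C \<and> (\<forall>x\<in>Arr C. \<forall>y\<in>Arr C.
      Cod C x = Dom C m \<longrightarrow> Cod C y = Dom C m \<longrightarrow> Dom C x = Dom C y \<longrightarrow>
      Comp C m x = Comp C m y \<longrightarrow> x = y)"

definition isomorphic :: "('o, 'm) cat \<Rightarrow> 'm \<Rightarrow> 'm \<Rightarrow> bool" where
  "isomorphic C f g \<longleftrightarrow> f \<in> Arr C \<and> g \<in> Arr C \<and> Cod C f = Cod C g \<and>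
     (\<exists>h. iso C h \<and> Dom C h = Dom C f \<and> Cod C h = Dom C g \<and> f = Comp C g h)"

definition factors :: "('o, 'm) cat \<Rightarrow> 'm \<Rightarrow> 'm \<Rightarrow> bool" where
  "factors C f v \<longleftrightarrow> f \<in> Arr C \<and> v \<in> Arr C \<and> Cod C f = Cod C v \<and>
     (\<exists>h\<in>Arr C. Dom C h = Dom C f \<and> Cod C h = Dom C v \<and> f = Comp C v h)"

definition equation :: "('o, 'm) cat \<Rightarrow> 'o \<Rightarrow> 'm \<times> 'm \<Rightarrow> bool" where
  "equation C A e \<longleftrightarrow> fst e \<in> Arr C \<and> snd e \<in> Arr C \<and>
     Dom C (fst e) = A \<and> Dom C (snd e) = A \<and> Cod C (fst e) = Cod C (snd e)"

definition system :: "'k itself \<Rightarrow> ('o, 'm) cat \<Rightarrow> 'o \<Rightarrow> ('m \<times> 'm) set \<Rightarrow> bool" where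
  "system k C A E \<longleftrightarrow> A \<in> Obj C \<and> E \<noteq> {} \<and> small k E \<and> (\<forall>e\<in>E. equation C A e)"

definition solution :: "('o, 'm) cat \<Rightarrow> 'o \<Rightarrow> ('m \<times> 'm) set \<Rightarrow> 'm \<Rightarrow> bool" where
  "solution C A E a \<longleftrightarrow> a \<in> Arr C \<and> Cod C a = A \<and>
     (\<forall>(f, g)\<in>E. Comp C f a = Comp C g a)"

definition sys_implies :: "('o, 'm) cat \<Rightarrow> 'o \<Rightarrow> ('m \<times> 'm) set \<Rightarrow> ('m \<times> 'm) set \<Rightarrow> bool" where
  "sys_implies C A E K \<longleftrightarrow> (\<forall>a. solution C A E a \<longrightarrow> solution C A K a)"

definition general_solution :: "('o, 'm) cat \<Rightarrow> 'o \<Rightarrow> ('m \<times> 'm) set \<Rightarrow> 'm \<Rightarrow> bool" where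
  "general_solution C A E v \<longleftrightarrow> solution C A E v \<and>
     (\<forall>a. solution C A E a \<longrightarrow>
        (\<exists>!h. h \<in> Arr C \<and> Dom C h = Dom C a \<and> Cod C h = Dom C v \<and> a = Comp C v h))"

definition variety :: "'k itself \<Rightarrow> ('o, 'm) cat \<Rightarrow> 'o \<Rightarrow> 'm \<Rightarrow> bool" where
  "variety k C A v \<longleftrightarrow> (\<exists>E. system k C A E \<and> general_solution C A E v)"

definition system_generated_by ::
    "'k itself \<Rightarrow> ('o, 'm) cat \<Rightarrow> 'o \<Rightarrow> 'm set \<Rightarrow> ('m \<times> 'm) set \<Rightarrow> bool" where
  "system_generated_by k C A S E \<longleftrightarrow> system k C A E \<and> (\<forall>f\<in>S. solution C A E f) \<and>
     (\<forall>K. system k C A K \<and> (\<forall>f\<in>S. solution C A K f) \<longrightarrow> sys_implies C A E K)"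

definition variety_generated_by ::
    "'k itself \<Rightarrow> ('o, 'm) cat \<Rightarrow> 'o \<Rightarrow> 'm set \<Rightarrow> 'm \<Rightarrow> bool" where
  "variety_generated_by k C A S v \<longleftrightarrow> variety k C A v \<and> (\<forall>f\<in>S. factors C f v) \<and>
     (\<forall>w. variety k C A w \<and> (\<forall>f\<in>S. factors C f w) \<longrightarrow> factors C v w)"

definition morphism_family :: "'k itself \<Rightarrow> ('o, 'm) cat \<Rightarrow> 'o \<Rightarrow> 'm set \<Rightarrow> bool" where
  "morphism_family k C A S \<longleftrightarrow> A \<in> Obj C \<and> S \<noteq> {} \<and> small k S \<and> S \<subseteq> Arr C \<and>
     (\<forall>f\<in>S. Cod C f = A)"

definition complete_wrt_varieties :: "'k itself \<Rightarrow> ('o, 'm) cat \<Rightarrow> bool" where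
  "complete_wrt_varieties k C \<longleftrightarrow>
     (\<forall>A S. morphism_family k C A S \<longrightarrow> (\<exists>v. variety_generated_by k C A S v))"

definition complete_wrt_systems :: "'k itself \<Rightarrow> ('o, 'm) cat \<Rightarrow> bool" where
  "complete_wrt_systems k C \<longleftrightarrow>
     (\<forall>A S. morphism_family k C A S \<longrightarrow> (\<exists>E. system_generated_by k C A S E))"

definition wellpowered_wrt_varieties :: "'k itself \<Rightarrow> ('o, 'm) cat \<Rightarrow> bool" where
  "wellpowered_wrt_varieties k C \<longleftrightarrow>
     (\<forall>A\<in>Obj C. \<exists>R. small k R \<and> (\<forall>v. variety k C A v \<longrightarrow> (\<exists>r\<in>R. isomorphic C v r)))"

definition wide_pullback :: "('o, 'm) cat \<Rightarrow> 'o \<Rightarrow> 'm set \<Rightarrow> 'm \<Rightarrow> ('m \<Rightarrow> 'm) \<Rightarrow> bool" where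
  "wide_pullback C A M p \<pi> \<longleftrightarrow>
     p \<in> Arr C \<and> Cod C p = A \<and>
     (\<forall>m\<in>M. \<pi> m \<in> Arr C \<and> Dom C (\<pi> m) = Dom C p \<and> Cod C (\<pi> m) = Dom C m \<and> Comp C m (\<pi> m) = p) \<and>
     (\<forall>q \<sigma>. q \<in> Arr C \<and> Cod C q = A \<and>
        (\<forall>m\<in>M. \<sigma> m \<in> Arr C \<and> Dom C (\<sigma> m) = Dom C q \<and> Cod C (\<sigma> m) = Dom C m \<and> Comp C m (\<sigma> m) = q)
        \<longrightarrow> (\<exists>!u. u \<in> Arr C \<and> Dom C u = Dom C q \<and> Cod C u = Dom C p \<and> Comp C p u = q \<and>
                   (\<forall>m\<in>M. Comp C (\<pi> m) u = \<sigma> m)))"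

definition has_intersections :: "'k itself \<Rightarrow> ('o, 'm) cat \<Rightarrow> bool" where
  "has_intersections k C \<longleftrightarrow>
     (\<forall>A M. A \<in> Obj C \<and> small k M \<and> (\<forall>m\<in>M. mono C m \<and> Cod C m = A) \<longrightarrow>
        (\<exists>p \<pi>. wide_pullback C A M p \<pi>))"

definition every_system_has_general_solution :: "'k itself \<Rightarrow> ('o, 'm) cat \<Rightarrow> bool" where
  "every_system_has_general_solution k C \<longleftrightarrow>
     (\<forall>A E. system k C A E \<longrightarrow> (\<exists>v. general_solution C A E v))"

end

theory Submission
  imports Defs
begin

lemma inf_pair: assumes "infinite (UNIV::'k set)" shows "\<exists>g::'k \<Rightarrow> 'k \<times> 'k. surj g"
proof -
  obtain f :: "'k\<times>'k \<Rightarrow> 'k" where "bij_betw f (UNIV \<times> UNIV) UNIV"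
    using card_of_ordIso[of "UNIV \<times> (UNIV::'k set)" "UNIV::'k set"] card_of_Times_same_infinite[of "UNIV::'k set"] assms by blast
  then have "bij f" by simp
  then show ?thesis using bij_is_surj bij_imp_bij_inv by blast
qed
lemma small_UN: assumes "infinite (UNIV::'k set)" "small (k::'k itself) I" "\<And>i. i \<in> I \<Longrightarrow> small k (F i)"
  shows "small k (\<Union>i\<in>I. F i)"
proof -
  obtain g :: "'k \<Rightarrow> 'k \<times> 'k" where g: "surj g" using inf_pair[OF assms(1)] by blast
  obtain e :: "'k \<Rightarrow> _" where e: "I \<subseteq> range e" using assms(2) unfolding small_def by blast
  have "\<forall>i\<in>I. \<exists>d :: 'k \<Rightarrow> _. F i \<subseteq> range d" using assms(3) unfolding small_def by blast
  then obtain d where d: "\<And>i. i \<in> I \<Longrightarrow> F i \<subseteq> range (d i :: 'k \<Rightarrow> _)" by metis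
  have "(\<Union>i\<in>I. F i) \<subseteq> range (\<lambda>x. d (e (fst (g x))) (snd (g x)))"
  proof
    fix y assume "y \<in> (\<Union>i\<in>I. F i)"
    then obtain i where i: "i \<in> I" "y \<in> F i" by blast
    obtain a where a: "i = e a" using e i by blast
    obtain b where b: "y = d i b" using d i by blast
    obtain x where "g x = (a, b)" using g by (metis surjD)
    then show "y \<in> range (\<lambda>x. d (e (fst (g x))) (snd (g x)))"
      by (intro range_eqI[where x=x]) (simp add: a b)
  qed
  then show ?thesis unfolding small_def by blast
qed
lemma small_Un: assumes "infinite (UNIV::'k set)" "small (k::'k itself) A" "small k B"
  shows "small k (A \<union> B)"
proof -
  obtain k0 :: 'k where True by blast
  have "UNIV \<noteq> {k0}" using assms(1) by (metis finite.emptyI finite_insert)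
  then obtain k1 :: 'k where k1: "k1 \<noteq> k0" by blast
  obtain g :: "'k \<Rightarrow> 'k \<times> 'k" where g: "surj g" using inf_pair[OF assms(1)] by blast
  obtain e1 :: "'k \<Rightarrow> _" where e1: "A \<subseteq> range e1" using assms(2) unfolding small_def by blast
  obtain e2 :: "'k \<Rightarrow> _" where e2: "B \<subseteq> range e2" using assms(3) unfolding small_def by blast
  define e where "e x = (if fst (g x) = k0 then e1 (snd (g x)) else e2 (snd (g x)))" for x
  have "A \<union> B \<subseteq> range e"
  proof
    fix y assume "y \<in> A \<union> B"
    then show "y \<in> range e"
    proof
      assume "y \<in> A" then obtain b where b: "y = e1 b" using e1 by blast
      obtain x where "g x = (k0, b)" using g by (metis surjD)
      then show ?thesis by (intro range_eqI[where x=x]) (simp add: e_def b)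
    next
      assume "y \<in> B" then obtain b where b: "y = e2 b" using e2 by blast
      obtain x where "g x = (k1, b)" using g by (metis surjD)
      then show ?thesis using k1 by (intro range_eqI[where x=x]) (simp add: e_def b)
    qed
  qed
  then show ?thesis unfolding small_def by blast
qed
lemma small_single: "small (k::'k itself) {x}" unfolding small_def
  by (rule exI[of _ "\<lambda>_. x"]) auto
lemma small_image: "small (k::'k itself) A \<Longrightarrow> small k (f ` A)" unfolding small_def
proof -
  assume "\<exists>e :: 'k \<Rightarrow> _. A \<subseteq> range e"
  then obtain e :: "'k \<Rightarrow> _" where "A \<subseteq> range e" by blast
  hence "f ` A \<subseteq> range (f \<circ> e)" by auto
  thus "\<exists>e :: 'k \<Rightarrow> _. f ` A \<subseteq> range e" by blast
qed
lemma ex1_same: "\<exists>!h. P h \<Longrightarrow> P x \<Longrightarrow> P y \<Longrightarrow> x = y" by blast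

lemma small_subset: "small (k::'k itself) A \<Longrightarrow> B \<subseteq> A \<Longrightarrow> small k B"
  unfolding small_def by blast

lemma cat_dc: "category C \<Longrightarrow> f \<in> Arr C \<Longrightarrow> Dom C f \<in> Obj C \<and> Cod C f \<in> Obj C"
  unfolding category_def by auto
lemma cat_id: "category C \<Longrightarrow> A \<in> Obj C \<Longrightarrow> Id C A \<in> Arr C \<and> Dom C (Id C A) = A \<and> Cod C (Id C A) = A"
  unfolding category_def by auto
lemma cat_comp: "category C \<Longrightarrow> f \<in> Arr C \<Longrightarrow> g \<in> Arr C \<Longrightarrow> Cod C f = Dom C g \<Longrightarrow>
   Comp C g f \<in> Arr C \<and> Dom C (Comp C g f) = Dom C f \<and> Cod C (Comp C g f) = Cod C g"
  unfolding category_def by auto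
lemma cat_idl: "category C \<Longrightarrow> f \<in> Arr C \<Longrightarrow> Comp C (Id C (Cod C f)) f = f"
  unfolding category_def by auto
lemma cat_idr: "category C \<Longrightarrow> f \<in> Arr C \<Longrightarrow> Comp C f (Id C (Dom C f)) = f"
  unfolding category_def by auto
lemma cat_assoc: "category C \<Longrightarrow> f \<in> Arr C \<Longrightarrow> g \<in> Arr C \<Longrightarrow> h \<in> Arr C \<Longrightarrow>
   Cod C f = Dom C g \<Longrightarrow> Cod C g = Dom C h \<Longrightarrow> Comp C h (Comp C g f) = Comp C (Comp C h g) f"
  unfolding category_def by auto

lemma solution_alt: "solution C A E a \<longleftrightarrow> a \<in> Arr C \<and> Cod C a = A \<and> (\<forall>e\<in>E. Comp C (fst e) a = Comp C (snd e) a)"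
  unfolding solution_def by auto

lemma sol_comp:
  assumes c: "category C" and eq: "\<forall>e\<in>E. equation C A e" and v: "solution C A E v"
    and h: "h \<in> Arr C" "Cod C h = Dom C v"
  shows "solution C A E (Comp C v h)"
  unfolding solution_alt
proof (intro conjI ballI)
  have va: "v \<in> Arr C" "Cod C v = A" using v unfolding solution_alt by auto
  show "Comp C v h \<in> Arr C" "Cod C (Comp C v h) = A" using cat_comp[OF c h(1) va(1) h(2)] va by auto
  fix e assume e: "e \<in> E"
  have ee: "fst e \<in> Arr C" "snd e \<in> Arr C" "Dom C (fst e) = A" "Dom C (snd e) = A"
    using eq e unfolding equation_def by auto
  have "Comp C (fst e) (Comp C v h) = Comp C (Comp C (fst e) v) h"
    using cat_assoc[OF c h(1) va(1) ee(1) h(2)] va ee by auto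
  also have "\<dots> = Comp C (Comp C (snd e) v) h" using v e unfolding solution_alt by auto
  also have "\<dots> = Comp C (snd e) (Comp C v h)"
    using cat_assoc[OF c h(1) va(1) ee(2) h(2)] va ee by auto
  finally show "Comp C (fst e) (Comp C v h) = Comp C (snd e) (Comp C v h)" .
qed

lemma gs_cancel:
  assumes c: "category C" and eq: "\<forall>e\<in>E. equation C A e" and v: "general_solution C A E v"
    and x: "x \<in> Arr C" "Cod C x = Dom C v" and y: "y \<in> Arr C" "Cod C y = Dom C v"
    and d: "Dom C x = Dom C y" and cv: "Comp C v x = Comp C v y"
  shows "x = y"
proof -
  have vs: "solution C A E v" using v unfolding general_solution_def by auto
  have va: "v \<in> Arr C" using vs unfolding solution_alt by auto
  have s: "solution C A E (Comp C v x)" by (rule sol_comp[OF c eq vs x])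
  have dd: "Dom C (Comp C v x) = Dom C x" using cat_comp[OF c x(1) va x(2)] by auto
  from v s have u: "\<exists>!h. h \<in> Arr C \<and> Dom C h = Dom C (Comp C v x) \<and> Cod C h = Dom C v \<and> Comp C v x = Comp C v h"
    unfolding general_solution_def by blast
  have px: "x \<in> Arr C \<and> Dom C x = Dom C (Comp C v x) \<and> Cod C x = Dom C v \<and> Comp C v x = Comp C v x"
    using x dd by simp
  have py: "y \<in> Arr C \<and> Dom C y = Dom C (Comp C v x) \<and> Cod C y = Dom C v \<and> Comp C v x = Comp C v y"
    using y dd d cv by simp
  show ?thesis by (rule ex1_same[OF u px py])
qed

lemma variety_props:
  assumes c: "category C" and v: "variety k C A v"
  shows "mono C v \<and> Cod C v = A \<and> v \<in> Arr C"
proof -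
  obtain E where E: "system k C A E" "general_solution C A E v" using v unfolding variety_def by blast
  have eq: "\<forall>e\<in>E. equation C A e" using E(1) unfolding system_def by auto
  have va: "v \<in> Arr C" "Cod C v = A" using E(2) unfolding general_solution_def solution_alt by auto
  have "mono C v" unfolding mono_def
  proof (intro conjI ballI impI)
    fix x y assume "x \<in> Arr C" "y \<in> Arr C" "Cod C x = Dom C v" "Cod C y = Dom C v"
      "Dom C x = Dom C y" "Comp C v x = Comp C v y"
    then show "x = y" using gs_cancel[OF c eq E(2)] by simp
  qed (rule va(1))
  then show ?thesis using va by simp
qed

lemma gs_factors:
  assumes "general_solution C A E v" "solution C A E a"
  shows "factors C a v"
proof -
  have "v \<in> Arr C" "Cod C v = A" "a \<in> Arr C" "Cod C a = A"
    using assms unfolding general_solution_def solution_alt by auto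
  moreover obtain h where "h \<in> Arr C \<and> Dom C h = Dom C a \<and> Cod C h = Dom C v \<and> a = Comp C v h"
    using assms unfolding general_solution_def by blast
  ultimately show ?thesis unfolding factors_def by auto
qed

lemma factors_sol:
  assumes c: "category C" and eq: "\<forall>e\<in>E. equation C A e" and w: "solution C A E w"
    and f: "factors C f w"
  shows "solution C A E f"
proof -
  obtain h where h: "h \<in> Arr C" "Dom C h = Dom C f" "Cod C h = Dom C w" "f = Comp C w h"
    using f unfolding factors_def by blast
  show ?thesis using sol_comp[OF c eq w h(1,3)] h(4) by simp
qed

lemma factors_trans:
  assumes c: "category C" and "factors C f g" "factors C g h"
  shows "factors C f h"
proof -
  obtain a where a: "a \<in> Arr C" "Dom C a = Dom C f" "Cod C a = Dom C g" "f = Comp C g a"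
    and fg: "f \<in> Arr C" "g \<in> Arr C" "Cod C f = Cod C g"
    using assms(2) unfolding factors_def by blast
  obtain b where b: "b \<in> Arr C" "Dom C b = Dom C g" "Cod C b = Dom C h" "g = Comp C h b"
    and gh: "h \<in> Arr C" "Cod C g = Cod C h"
    using assms(3) unfolding factors_def by blast
  have ba: "Comp C b a \<in> Arr C" "Dom C (Comp C b a) = Dom C a" "Cod C (Comp C b a) = Cod C b"
    using cat_comp[OF c a(1) b(1)] a b by auto
  have "f = Comp C h (Comp C b a)" using cat_assoc[OF c a(1) b(1) gh(1)] a b by auto
  then show ?thesis unfolding factors_def using fg gh ba a b by auto
qed

lemma isomorphic_factors:
  assumes c: "category C" and i: "isomorphic C v r"
  shows "factors C v r \<and> factors C r v"
proof -
  obtain h where h: "iso C h" "Dom C h = Dom C v" "Cod C h = Dom C r" "v = Comp C r h"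
    and vr: "v \<in> Arr C" "r \<in> Arr C" "Cod C v = Cod C r"
    using i unfolding isomorphic_def by blast
  obtain h' where h': "h' \<in> Arr C" "Dom C h' = Cod C h" "Cod C h' = Dom C h"
     "Comp C h h' = Id C (Cod C h)" and ha: "h \<in> Arr C"
    using h(1) unfolding iso_def by blast
  have "Comp C v h' = Comp C r (Comp C h h')"
    using cat_assoc[OF c h'(1) ha vr(2)] h h' by auto
  also have "\<dots> = r" using h'(4) h(3) cat_idr[OF c vr(2)] by simp
  finally have "r = Comp C v h'" by simp
  then show ?thesis unfolding factors_def using h h' vr ha by auto
qed

lemma case2:
  assumes c: "category C" and cs: "complete_wrt_systems k C" and gs: "every_system_has_general_solution k C"
  shows "complete_wrt_varieties k C"
  unfolding complete_wrt_varieties_def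
proof (intro allI impI)
  fix A S assume fam: "morphism_family k C A S"
  obtain E where E: "system_generated_by k C A S E" using cs fam unfolding complete_wrt_systems_def by blast
  have sysE: "system k C A E" using E unfolding system_generated_by_def by auto
  obtain v where v: "general_solution C A E v" using gs sysE unfolding every_system_has_general_solution_def by blast
  have solS: "\<forall>f\<in>S. solution C A E f" using E unfolding system_generated_by_def by auto
  have "variety k C A v" unfolding variety_def using sysE v by blast
  moreover have "\<forall>f\<in>S. factors C f v"
  proof
    fix f assume "f \<in> S" then show "factors C f v" using solS gs_factors[OF v] by auto
  qed
  moreover have "factors C v w" if w: "variety k C A w" "\<forall>f\<in>S. factors C f w" for w
  proof -
    obtain K where K: "system k C A K" "general_solution C A K w" using w(1) unfolding variety_def by blast
    have eqK: "\<forall>e\<in>K. equation C A e" using K(1) unfolding system_def by auto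
    have wK: "solution C A K w" using K(2) unfolding general_solution_def by auto
    have "\<forall>f\<in>S. solution C A K f" using factors_sol[OF c eqK wK] w(2) by auto
    moreover have "\<forall>K. system k C A K \<and> (\<forall>f\<in>S. solution C A K f) \<longrightarrow> sys_implies C A E K"
      using E unfolding system_generated_by_def by auto
    ultimately have "sys_implies C A E K" using K(1) by auto
    moreover have "solution C A E v" using v unfolding general_solution_def by auto
    ultimately have "solution C A K v" unfolding sys_implies_def by blast
    then show ?thesis using gs_factors[OF K(2)] by blast
  qed
  ultimately have "variety_generated_by k C A S v" unfolding variety_generated_by_def by auto
  then show "\<exists>v. variety_generated_by k C A S v" by blast
qed

lemma case1:
  assumes c: "category C" and inf: "infinite (UNIV::'k set)"
    and wp: "wellpowered_wrt_varieties (k::'k itself) C" and hi: "has_intersections k C"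
  shows "complete_wrt_varieties k C"
  unfolding complete_wrt_varieties_def
proof (intro allI impI)
  fix A S assume fam: "morphism_family k C A S"
  have A: "A \<in> Obj C" using fam unfolding morphism_family_def by auto
  obtain R where R: "small k R" "\<forall>v. variety k C A v \<longrightarrow> (\<exists>r\<in>R. isomorphic C v r)"
    using wp A unfolding wellpowered_wrt_varieties_def by blast
  define P where "P w \<longleftrightarrow> variety k C A w \<and> (\<forall>f\<in>S. factors C f w)" for w
  define R' where "R' = {r\<in>R. \<exists>w. P w \<and> isomorphic C w r}"
  define rep where "rep r = (SOME w. P w \<and> isomorphic C w r)" for r
  define M where "M = rep ` R'"
  have repP: "P (rep r) \<and> isomorphic C (rep r) r" if "r \<in> R'" for r
  proof -
    have "\<exists>w. P w \<and> isomorphic C w r" using that unfolding R'_def by auto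
    then show ?thesis unfolding rep_def by (rule someI_ex)
  qed
  have MP: "P m" if "m \<in> M" for m using that repP unfolding M_def by auto
  have smallM: "small k M" unfolding M_def
    by (rule small_image, rule small_subset[OF R(1)]) (auto simp: R'_def)
  have Mmono: "mono C m \<and> Cod C m = A" if "m \<in> M" for m
    using MP[OF that] variety_props[OF c] unfolding P_def by blast
  have "\<exists>p \<pi>. wide_pullback C A M p \<pi>"
    using hi A smallM Mmono unfolding has_intersections_def by blast
  then obtain p \<pi> where wpb: "wide_pullback C A M p \<pi>" by blast
  have p: "p \<in> Arr C" "Cod C p = A" using wpb unfolding wide_pullback_def by auto
  have pi: "\<pi> m \<in> Arr C \<and> Dom C (\<pi> m) = Dom C p \<and> Cod C (\<pi> m) = Dom C m \<and> Comp C m (\<pi> m) = p"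
    if "m \<in> M" for m using wpb that unfolding wide_pullback_def by auto
  have univ: "\<exists>!u. u \<in> Arr C \<and> Dom C u = Dom C q \<and> Cod C u = Dom C p \<and> Comp C p u = q \<and>
                   (\<forall>m\<in>M. Comp C (\<pi> m) u = \<sigma> m)"
    if "q \<in> Arr C" "Cod C q = A"
       "\<forall>m\<in>M. \<sigma> m \<in> Arr C \<and> Dom C (\<sigma> m) = Dom C q \<and> Cod C (\<sigma> m) = Dom C m \<and> Comp C m (\<sigma> m) = q"
    for q \<sigma>
  proof -
    have "\<forall>q \<sigma>. q \<in> Arr C \<and> Cod C q = A \<and>
        (\<forall>m\<in>M. \<sigma> m \<in> Arr C \<and> Dom C (\<sigma> m) = Dom C q \<and> Cod C (\<sigma> m) = Dom C m \<and> Comp C m (\<sigma> m) = q)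
        \<longrightarrow> (\<exists>!u. u \<in> Arr C \<and> Dom C u = Dom C q \<and> Cod C u = Dom C p \<and> Comp C p u = q \<and>
                   (\<forall>m\<in>M. Comp C (\<pi> m) u = \<sigma> m))"
      using wpb unfolding wide_pullback_def by (elim conjE)
    then show ?thesis using that by blast
  qed
  have mA: "m \<in> Arr C" if "m \<in> M" for m using Mmono[OF that] unfolding mono_def by auto
  have fac_p: "factors C q p" if q: "q \<in> Arr C" "Cod C q = A" "\<forall>m\<in>M. factors C q m" for q
  proof -
    define \<sigma> where "\<sigma> m = (SOME h. h \<in> Arr C \<and> Dom C h = Dom C q \<and> Cod C h = Dom C m \<and> q = Comp C m h)" for m
    have sig: "\<forall>m\<in>M. \<sigma> m \<in> Arr C \<and> Dom C (\<sigma> m) = Dom C q \<and> Cod C (\<sigma> m) = Dom C m \<and> Comp C m (\<sigma> m) = q"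
    proof
      fix m assume "m \<in> M"
      then have "\<exists>h. h \<in> Arr C \<and> Dom C h = Dom C q \<and> Cod C h = Dom C m \<and> q = Comp C m h"
        using q(3) unfolding factors_def by blast
      then have "\<sigma> m \<in> Arr C \<and> Dom C (\<sigma> m) = Dom C q \<and> Cod C (\<sigma> m) = Dom C m \<and> q = Comp C m (\<sigma> m)"
        unfolding \<sigma>_def by (rule someI_ex)
      then show "\<sigma> m \<in> Arr C \<and> Dom C (\<sigma> m) = Dom C q \<and> Cod C (\<sigma> m) = Dom C m \<and> Comp C m (\<sigma> m) = q"
        by simp
    qed
    obtain u where "u \<in> Arr C" "Dom C u = Dom C q" "Cod C u = Dom C p" "Comp C p u = q"
      using univ[OF q(1,2) sig] by blast
    then show ?thesis unfolding factors_def using q p by auto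
  qed
  have uniq: "u1 = u2" if u1: "u1 \<in> Arr C" "Cod C u1 = Dom C p" and u2: "u2 \<in> Arr C" "Cod C u2 = Dom C p"
    and d: "Dom C u1 = Dom C u2" and e: "Comp C p u1 = Comp C p u2" for u1 u2
  proof -
    define q where "q = Comp C p u1"
    have q: "q \<in> Arr C" "Cod C q = A" "Dom C q = Dom C u1"
      using cat_comp[OF c u1(1) p(1) u1(2)] p unfolding q_def by auto
    define \<sigma> where "\<sigma> m = Comp C (\<pi> m) u1" for m
    have comp_eq: "Comp C m (Comp C (\<pi> m) u) = Comp C p u" if "m \<in> M" "u \<in> Arr C" "Cod C u = Dom C p" for m u
      using cat_assoc[OF c that(2) conjunct1[OF pi[OF that(1)]] mA[OF that(1)]] pi[OF that(1)] that(3) by auto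
    have sig: "\<forall>m\<in>M. \<sigma> m \<in> Arr C \<and> Dom C (\<sigma> m) = Dom C q \<and> Cod C (\<sigma> m) = Dom C m \<and> Comp C m (\<sigma> m) = q"
    proof
      fix m assume m: "m \<in> M"
      show "\<sigma> m \<in> Arr C \<and> Dom C (\<sigma> m) = Dom C q \<and> Cod C (\<sigma> m) = Dom C m \<and> Comp C m (\<sigma> m) = q"
        using cat_comp[OF c u1(1) conjunct1[OF pi[OF m]]] pi[OF m] u1 q comp_eq[OF m u1] unfolding \<sigma>_def q_def by auto
    qed
    have P2: "Comp C (\<pi> m) u2 = \<sigma> m" if m: "m \<in> M" for m
    proof -
      have a1: "Comp C (\<pi> m) u1 \<in> Arr C \<and> Dom C (Comp C (\<pi> m) u1) = Dom C u1 \<and> Cod C (Comp C (\<pi> m) u1) = Dom C m"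
        using cat_comp[OF c u1(1) conjunct1[OF pi[OF m]]] pi[OF m] u1 by auto
      have a2: "Comp C (\<pi> m) u2 \<in> Arr C \<and> Dom C (Comp C (\<pi> m) u2) = Dom C u2 \<and> Cod C (Comp C (\<pi> m) u2) = Dom C m"
        using cat_comp[OF c u2(1) conjunct1[OF pi[OF m]]] pi[OF m] u2 by auto
      have "Comp C m (Comp C (\<pi> m) u2) = Comp C m (Comp C (\<pi> m) u1)"
        using comp_eq[OF m u1] comp_eq[OF m u2] e by simp
      then show ?thesis using Mmono[OF m] a1 a2 d unfolding mono_def \<sigma>_def by auto
    qed
    have P1: "\<forall>m\<in>M. Comp C (\<pi> m) u1 = \<sigma> m" unfolding \<sigma>_def by simp
    show ?thesis
      by (rule ex1_same[OF univ[OF q(1,2) sig]]) (use u1 u2 q d e P1 P2 in \<open>auto simp: q_def\<close>)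
  qed
  define Sys where "Sys m = (SOME E. system k C A E \<and> general_solution C A E m)" for m
  have SysP: "system k C A (Sys m) \<and> general_solution C A (Sys m) m" if "m \<in> M" for m
  proof -
    have "\<exists>E. system k C A E \<and> general_solution C A E m" using MP[OF that] unfolding P_def variety_def by blast
    then show ?thesis unfolding Sys_def by (rule someI_ex)
  qed
  define E where "E = {(Id C A, Id C A)} \<union> (\<Union>m\<in>M. Sys m)"
  have ideq: "equation C A (Id C A, Id C A)" using cat_id[OF c A] unfolding equation_def by auto
  have sysE: "system k C A E" unfolding system_def
  proof (intro conjI ballI)
    show "A \<in> Obj C" by (rule A)
    show "E \<noteq> {}" unfolding E_def by auto
    show "small k E" unfolding E_def
    proof (rule small_Un[OF inf small_single], rule small_UN[OF inf])
      show "small k M" by (rule smallM)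
    qed (use SysP in \<open>auto simp: system_def\<close>)
    fix e assume "e \<in> E"
    then show "equation C A e" unfolding E_def using ideq SysP unfolding system_def by auto
  qed
  have eqSys: "\<forall>e\<in>Sys m. equation C A e" if "m \<in> M" for m using SysP[OF that] unfolding system_def by auto
  have solE: "solution C A E a \<longleftrightarrow> a \<in> Arr C \<and> Cod C a = A \<and> (\<forall>m\<in>M. solution C A (Sys m) a)" for a
  proof
    assume "solution C A E a" then show "a \<in> Arr C \<and> Cod C a = A \<and> (\<forall>m\<in>M. solution C A (Sys m) a)"
      unfolding solution_alt E_def by auto
  next
    assume h: "a \<in> Arr C \<and> Cod C a = A \<and> (\<forall>m\<in>M. solution C A (Sys m) a)"
    have "Comp C (Id C A) a = Comp C (Id C A) a" by simp
    then show "solution C A E a" using h unfolding solution_alt E_def by auto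
  qed
  have solp: "solution C A E p" unfolding solE
  proof (intro conjI ballI)
    fix m assume m: "m \<in> M"
    have "solution C A (Sys m) m" using SysP[OF m] unfolding general_solution_def by auto
    from sol_comp[OF c eqSys[OF m] this conjunct1[OF pi[OF m]]] pi[OF m]
    show "solution C A (Sys m) p" by auto
  qed (use p in auto)
  have gsp: "general_solution C A E p" unfolding general_solution_def
  proof (intro conjI allI impI)
    show "solution C A E p" by (rule solp)
    fix a assume a: "solution C A E a"
    have aa: "a \<in> Arr C" "Cod C a = A" using a unfolding solution_alt by auto
    have "\<forall>m\<in>M. factors C a m"
    proof
      fix m assume m: "m \<in> M"
      have "solution C A (Sys m) a" using a m unfolding solE by auto
      then show "factors C a m" using SysP[OF m] gs_factors by auto
    qed
    then have "factors C a p" using fac_p[OF aa] by simp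
    then obtain h where h: "h \<in> Arr C" "Dom C h = Dom C a" "Cod C h = Dom C p" "a = Comp C p h"
      unfolding factors_def by blast
    show "\<exists>!h. h \<in> Arr C \<and> Dom C h = Dom C a \<and> Cod C h = Dom C p \<and> a = Comp C p h"
    proof (rule ex1I[of _ h])
      show "h \<in> Arr C \<and> Dom C h = Dom C a \<and> Cod C h = Dom C p \<and> a = Comp C p h" using h by simp
      fix h' assume "h' \<in> Arr C \<and> Dom C h' = Dom C a \<and> Cod C h' = Dom C p \<and> a = Comp C p h'"
      then have H: "h' \<in> Arr C" "Dom C h' = Dom C a" "Cod C h' = Dom C p" "a = Comp C p h'" by auto
      show "h' = h"
      proof (rule uniq)
        show "Comp C p h' = Comp C p h" using H(4) h(4) by simp
      qed (use H h in simp_all)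
    qed
  qed
  have varp: "variety k C A p" unfolding variety_def using sysE gsp by blast
  have famS: "f \<in> Arr C \<and> Cod C f = A" if "f \<in> S" for f using fam that unfolding morphism_family_def by auto
  have facS: "\<forall>f\<in>S. factors C f p"
  proof
    fix f assume f: "f \<in> S"
    have "\<forall>m\<in>M. factors C f m" using MP f unfolding P_def by auto
    then show "factors C f p" using fac_p famS[OF f] by simp
  qed
  have minp: "factors C p w" if w: "variety k C A w" "\<forall>f\<in>S. factors C f w" for w
  proof -
    obtain r where r: "r \<in> R" "isomorphic C w r" using R(2) w(1) by blast
    have rR': "r \<in> R'" unfolding R'_def P_def using r w by blast
    have m: "rep r \<in> M" unfolding M_def using rR' by blast
    have "factors C p (rep r)" unfolding factors_def using pi[OF m] p mA[OF m] Mmono[OF m] by auto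
    moreover have "factors C (rep r) r" using isomorphic_factors[OF c] repP[OF rR'] by blast
    moreover have "factors C r w" using isomorphic_factors[OF c r(2)] by blast
    ultimately show ?thesis using factors_trans[OF c] by blast
  qed
  have "variety_generated_by k C A S p" unfolding variety_generated_by_def using varp facS minp by blast
  then show "\<exists>v. variety_generated_by k C A S v" by blast
qed

theorem mainTheorem8:
  fixes C :: "('o, 'm) cat" and k :: "'k itself"
  assumes "category C"
    and "infinite (UNIV :: 'k set)"
    and "(wellpowered_wrt_varieties k C \<and> has_intersections k C) \<or>
         (complete_wrt_systems k C \<and> every_system_has_general_solution k C)"
  shows "complete_wrt_varieties k C"
  using assms(3)
proof
  assume "wellpowered_wrt_varieties k C \<and> has_intersections k C"
  then show ?thesis using case1[OF assms(1,2), where k=k] by blast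
next
  assume "complete_wrt_systems k C \<and> every_system_has_general_solution k C"
  then show ?thesis using case2[OF assms(1), of k] by blast
qed

end
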